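(* Let $n$ be a positive integer and $j$ a non-negative integer. Then $$\binom{2j}{j}\sum_{k=j}^{n-1}(4k+3)\binom{k}{j}^2\equiv 0\pmod n.$$
   Context: An empty sum (when $j>n-1$) is zero. *)

theory Defs
  imports Main
begin

end

theory Submission
  imports Defs
begin

lemma absorb2: "Suc m * (n choose Suc m) = (n - m) * (n choose m)"
proof (cases n)
  case 0 then show ?thesis by simp
next
  case (Suc n')
  then show ?thesis using Suc_times_binomial[of m n'] binomial_absorb_comp[of n m] by simp
qed

lemma L2: "(\<Sum>k<n. (4*k+3)*(k choose m)) = (4*m+3)*(n choose (m+1)) + 4*(m+1)*(n choose (m+2))"
proof (induction n)
  case 0 then show ?case by simp
next
  case (Suc n)
  have a: "(m+1)*(n choose (m+1)) = (n-m)*(n choose m)" using absorb2[of m n] by simp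
  have b: "(4*m+3)*(n choose m) + 4*((n-m)*(n choose m)) = (4*n+3)*(n choose m)"
  proof (cases "m \<le> n")
    case True
    then show ?thesis by (simp add: algebra_simps diff_mult_distrib2 diff_mult_distrib)
  next
    case False then show ?thesis by simp
  qed
  have "(\<Sum>k<Suc n. (4*k+3)*(k choose m)) = (4*m+3)*(n choose (m+1)) + 4*(m+1)*(n choose (m+2)) + (4*n+3)*(n choose m)"
    using Suc by simp
  also have "\<dots> = (4*m+3)*(n choose (m+1)) + 4*(m+1)*(n choose (m+2)) + (4*m+3)*(n choose m) + 4*((m+1)*(n choose (m+1)))"
    using a b by simp
  also have "\<dots> = (4*m+3)*(Suc n choose (m+1)) + 4*(m+1)*(Suc n choose (m+2))"
    by (simp add: algebra_simps numeral_eq_Suc)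
  finally show ?case .
qed

lemma L1: "(k choose j)^2 = (\<Sum>i\<le>j. (j choose i)*((j+i) choose i)*(k choose (j+i)))"
proof (cases "j \<le> k")
  case False then show ?thesis by (simp add: power2_eq_square binomial_eq_0)
next
  case True
  have v: "(\<Sum>i\<le>j. ((k-j) choose i) * (j choose i)) = k choose j"
    using vandermonde[of "k-j" j j] True
    by (metis (no_types, lifting) binomial_symmetric le_add_diff_inverse2 atMost_iff sum.cong)
  have c: "(k choose j) * ((k-j) choose i) = (k choose (j+i)) * ((j+i) choose i)" for i
  proof (cases "j+i \<le> k")
    case True
    then show ?thesis using choose_mult[of j "j+i" k] binomial_symmetric[of i "j+i"] by simp
  next
    case False
    then have "k - j < i" using \<open>j \<le> k\<close> by simp
    then show ?thesis using False by (simp add: binomial_eq_0)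
  qed
  have "(k choose j)^2 = (k choose j) * (\<Sum>i\<le>j. ((k-j) choose i) * (j choose i))"
    using v by (simp add: power2_eq_square)
  also have "\<dots> = (\<Sum>i\<le>j. (j choose i)*((k choose j) * ((k-j) choose i)))"
    by (simp add: sum_distrib_left algebra_simps)
  also have "\<dots> = (\<Sum>i\<le>j. (j choose i)*((j+i) choose i)*(k choose (j+i)))"
    using c by (simp add: algebra_simps)
  finally show ?thesis .
qed

lemma L4a:
  assumes "i \<le> j"
  shows "(j+i+1) dvd ((2*j) choose j) * ((j choose i)*((j+i) choose i)*(4*(j+i)+3)
     + (if i=0 then 0 else (j choose (i-1))*((j+i-1) choose (i-1))*(4*(j+i))))"
proof -
  obtain t where t: "j = i + t" using assms le_Suc_ex by blast
  define A where "A = (j choose i)*((j+i) choose i)"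
  define B where "B = (j choose i)*((j+i) choose i)*(4*(j+i)+3)
     + (if i=0 then 0 else (j choose (i-1))*((j+i-1) choose (i-1))*(4*(j+i)))"
  have e1: "(j choose i) * (j+1) = ((j+1) choose i) * (t+1)"
    using binomial_absorb_comp[of "j+1" i] t by (simp add: algebra_simps)
  have e2: "(t+1) * B = A * ((4*(j+i)+3)*(t+1) + 4*i*i)"
  proof (cases i)
    case 0 then show ?thesis by (simp add: B_def A_def)
  next
    case (Suc i')
    have f1: "(j choose i') * (t+1) = (j choose i) * i"
      using Suc_times_binomial_add[of i' t] Suc t by (simp add: algebra_simps)
    have f2: "((j+i') choose i') * (j+i) = ((j+i) choose i) * i"
      using Suc_times_binomial[of i' "j+i'"] Suc by (simp add: algebra_simps)
    have "(t+1) * B = A*(4*(j+i)+3)*(t+1) + ((j choose i') * (t+1)) * (((j+i') choose i') * (j+i)) * 4"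
      by (simp add: B_def A_def Suc algebra_simps)
    also have "\<dots> = A * ((4*(j+i)+3)*(t+1) + 4*i*i)"
      unfolding f1 f2 by (simp add: A_def algebra_simps)
    finally show ?thesis .
  qed
  have e3: "B = (2*j+1)*A + 2*(j+i+1)*(((j+1) choose i)*((j+i) choose i))"
  proof -
    have "(t+1) * B = (t+1) * ((2*j+1)*A + 2*(j+i+1)*(((j+1) choose i)*((j+i) choose i)))"
    proof -
      have "(t+1) * ((2*j+1)*A + 2*(j+i+1)*(((j+1) choose i)*((j+i) choose i)))
          = (2*j+1)*A*(t+1) + 2*(j+i+1)*((((j+1) choose i)*(t+1))*((j+i) choose i))"
        by (simp add: algebra_simps)
      also have "\<dots> = A*((2*j+1)*(t+1) + 2*(j+i+1)*(j+1))"
        unfolding e1[symmetric] by (simp add: A_def algebra_simps)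
      also have "\<dots> = A * ((4*(j+i)+3)*(t+1) + 4*i*i)"
        using t by (simp add: algebra_simps)
      finally show ?thesis using e2 by simp
    qed
    moreover have "t+1 \<noteq> 0" by simp
    ultimately show ?thesis by (metis mult_left_cancel)
  qed
  have g1: "((2*j) choose j) * (2*j+1) = ((2*j+1) choose j) * (j+1)"
  proof -
    have "((2*j+1) choose j) = ((2*j+1) choose (j+1))" using binomial_symmetric[of j "2*j+1"] by simp
    then show ?thesis using Suc_times_binomial[of j "2*j"] by (simp add: algebra_simps)
  qed
  have g2: "((2*j+1) choose j) * (j choose i) = ((2*j+1) choose t) * ((j+i+1) choose i)"
  proof -
    have "(j choose i) = (j choose t)" using binomial_symmetric[of i j] t by simp
    moreover have "2*j+1-t = j+i+1" "j - t = i" using t by auto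
    moreover have "((2*j+1) choose j)*(j choose t) = ((2*j+1) choose t)*((2*j+1-t) choose (j-t))"
      by (rule choose_mult) (use t in auto)
    ultimately show ?thesis by simp
  qed
  have g3: "((j+i+1) choose i) * (j+1) = (j+i+1) * ((j+i) choose i)"
    using binomial_absorb_comp[of "j+i+1" i] by (simp add: algebra_simps)
  have "((2*j) choose j) * ((2*j+1)*A) = (j+i+1) * (((2*j+1) choose t) * ((j+i) choose i)^2)"
  proof -
    have "((2*j) choose j) * ((2*j+1)*A) = (((2*j) choose j) * (2*j+1)) * (j choose i) * ((j+i) choose i)"
      by (simp add: A_def algebra_simps)
    also have "\<dots> = (((2*j+1) choose j) * (j choose i)) * (j+1) * ((j+i) choose i)"
      unfolding g1 by (simp add: algebra_simps)
    also have "\<dots> = ((2*j+1) choose t) * (((j+i+1) choose i) * (j+1)) * ((j+i) choose i)"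
      unfolding g2 by (simp add: algebra_simps)
    also have "\<dots> = (j+i+1) * (((2*j+1) choose t) * ((j+i) choose i)^2)"
      unfolding g3 by (simp add: algebra_simps power2_eq_square)
    finally show ?thesis .
  qed
  then have "((2*j) choose j) * B = (j+i+1) * (((2*j+1) choose t) * ((j+i) choose i)^2
     + 2*((2*j) choose j)*(((j+1) choose i)*((j+i) choose i)))"
    unfolding e3 by (simp add: algebra_simps)
  then show ?thesis unfolding B_def[symmetric] by (metis dvd_triv_left)
qed

lemma L4b:
  "(j+Suc j+1) dvd ((2*j) choose j) * ((j choose Suc j)*((j+Suc j) choose Suc j)*(4*(j+Suc j)+3)
     + (if Suc j=0 then 0 else (j choose (Suc j-1))*((j+Suc j-1) choose (Suc j-1))*(4*(j+Suc j))))"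
proof -
  define C where "C = ((2*j) choose j)"
  define D where "D = ((2*j+1) choose (j+1))"
  have h: "C * (2*j+1) = D * (j+1)"
    using Suc_times_binomial[of j "2*j"] unfolding C_def D_def by (simp add: algebra_simps del: binomial_Suc_Suc)
  have "((2*j) choose j) * ((j choose Suc j)*((j+Suc j) choose Suc j)*(4*(j+Suc j)+3)
     + (if Suc j=0 then 0 else (j choose (Suc j-1))*((j+Suc j-1) choose (Suc j-1))*(4*(j+Suc j))))
     = C * (C * (4*(2*j+1)))"
    unfolding C_def by (simp add: binomial_eq_0 mult_2)
  also have "\<dots> = 4 * (C * (2*j+1)) * C" by (simp add: algebra_simps)
  also have "\<dots> = (j+Suc j+1) * (2 * D * C)" unfolding h by (simp add: algebra_simps)
  finally show ?thesis by (metis dvd_triv_left)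
qed

lemma term_dvd:
  assumes "n > 0" "(m+1) dvd c"
  shows "n dvd c * (n choose (m+1))"
proof -
  obtain q where q: "c = (m+1)*q" using assms(2) by blast
  obtain n' where n: "n = Suc n'" using assms(1) gr0_implies_Suc by blast
  have "c * (n choose (m+1)) = q * (Suc m * (Suc n' choose Suc m))" using q n by (simp add: algebra_simps del: binomial_Suc_Suc)
  also have "\<dots> = q * (n * (n' choose m))" using Suc_times_binomial[of m n'] n by simp
  finally show ?thesis by simp
qed


theorem mainTheorem10:
  fixes n j :: nat
  assumes "n > 0"
  shows "n dvd ((2 * j) choose j) * (\<Sum>k = j..n - 1. (4 * k + 3) * (k choose j)^2)"
proof -
  define A where "A = (\<lambda>i. (j choose i)*((j+i) choose i))"
  define C where "C = ((2*j) choose j)"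
  define B where "B = (\<lambda>i. A i*(4*(j+i)+3) + (if i=0 then 0 else A (i-1)*(4*(j+i))))"
  have s1: "(\<Sum>k = j..n - 1. (4 * k + 3) * (k choose j)^2) = (\<Sum>k<n. (4 * k + 3) * (k choose j)^2)"
  proof (rule sum.mono_neutral_left)
    show "finite {..<n}" by simp
    show "{j..n - 1} \<subseteq> {..<n}" using assms by auto
    show "\<forall>i\<in>{..<n} - {j..n - 1}. (4 * i + 3) * (i choose j)\<^sup>2 = 0"
      using assms by (auto simp: binomial_eq_0)
  qed
  have s2: "(\<Sum>k<n. (4 * k + 3) * (k choose j)^2)
      = (\<Sum>i\<le>j. A i * ((4*(j+i)+3)*(n choose (j+i+1)) + 4*(j+i+1)*(n choose (j+i+2))))"
  proof -
    have "(\<Sum>k<n. (4 * k + 3) * (k choose j)^2)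
       = (\<Sum>k<n. \<Sum>i\<le>j. A i * ((4 * k + 3) * (k choose (j+i))))"
      unfolding L1 A_def by (simp add: sum_distrib_left algebra_simps)
    also have "\<dots> = (\<Sum>i\<le>j. A i * (\<Sum>k<n. (4 * k + 3) * (k choose (j+i))))"
      by (subst sum.swap) (simp add: sum_distrib_left)
    also have "\<dots> = (\<Sum>i\<le>j. A i * ((4*(j+i)+3)*(n choose (j+i+1)) + 4*(j+i+1)*(n choose (j+i+2))))"
      unfolding L2 by simp
    finally show ?thesis .
  qed
  have s3: "C * (\<Sum>i\<le>j. A i * ((4*(j+i)+3)*(n choose (j+i+1)) + 4*(j+i+1)*(n choose (j+i+2))))
      = (\<Sum>i\<le>Suc j. C * B i * (n choose (j+i+1)))"
  proof -
    have p1: "(\<Sum>i\<le>Suc j. C * (A i*(4*(j+i)+3)) * (n choose (j+i+1)))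
        = (\<Sum>i\<le>j. C * (A i*(4*(j+i)+3)) * (n choose (j+i+1)))"
      by (simp add: A_def)
    have p2: "(\<Sum>i\<le>Suc j. C * (if i=0 then 0 else A (i-1)*(4*(j+i))) * (n choose (j+i+1)))
        = (\<Sum>i\<le>j. C * (A i*(4*(j+i+1))) * (n choose (j+i+2)))"
      by (subst sum.atMost_Suc_shift) (simp add: algebra_simps)
    have "(\<Sum>i\<le>Suc j. C * B i * (n choose (j+i+1)))
       = (\<Sum>i\<le>Suc j. C * (A i*(4*(j+i)+3)) * (n choose (j+i+1)))
       + (\<Sum>i\<le>Suc j. C * (if i=0 then 0 else A (i-1)*(4*(j+i))) * (n choose (j+i+1)))"
      unfolding B_def by (simp add: sum.distrib[symmetric] algebra_simps)
    also have "\<dots> = C * (\<Sum>i\<le>j. A i * ((4*(j+i)+3)*(n choose (j+i+1)) + 4*(j+i+1)*(n choose (j+i+2))))"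
      unfolding p1 p2 by (simp add: sum_distrib_left sum.distrib[symmetric] algebra_simps)
    finally show ?thesis by simp
  qed
  have s4: "n dvd (\<Sum>i\<le>Suc j. C * B i * (n choose (j+i+1)))"
  proof (rule dvd_sum)
    fix i assume i: "i \<in> {..Suc j}"
    have "(j+i+1) dvd C * B i"
    proof (cases "i = Suc j")
      case True then show ?thesis using L4b[of j] unfolding C_def B_def A_def by simp
    next
      case False then have "i \<le> j" using i by auto
      then show ?thesis using L4a[of i j] unfolding C_def B_def A_def by (cases i) simp_all
    qed
    then show "n dvd C * B i * (n choose (j+i+1))"
      using term_dvd[OF assms, of "j+i"] by simp
  qed
  show ?thesis using s1 s2 s3 s4 unfolding C_def by simp
qed

end
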